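(* Let $G$ be a group and $c\in G$. If the set $\{(x,y)\in G^2:[x,y]=c\}$ is $4$-large in $G^2$, then $G$ is abelian and $c=1$. Consequently, if $\mu$ is a left-invariant probability measure on some algebra of subsets of $G^2$ with inner measure $\mu_*$, and $G$ is not abelian or $c\ne1$, then $\mu_*(\{(x,y)\in G^2:[x,y]=c\})\le\frac34$.
   Context: $[x,y]=x^{-1}y^{-1}xy$. A subset $X$ of a group $K$ is $k$-large in $K$ if the intersection of any $k$ left translates $a_1X\cap\dots\cap a_kX$ ($a_i\in K$) is non-empty. The inner measure is $\mu_*(X)=\sup\{\mu(Y):Y\subseteq X\text{ measurable}\}$. *)

theory Defs
  imports "HOL-Algebra.Coset" "HOL-Analysis.Sigma_Algebra"
begin

definition commutator :: "('a, 'b) monoid_scheme \<Rightarrow> 'a \<Rightarrow> 'a \<Rightarrow> 'a" where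
  "commutator G x y = inv\<^bsub>G\<^esub> x \<otimes>\<^bsub>G\<^esub> inv\<^bsub>G\<^esub> y \<otimes>\<^bsub>G\<^esub> x \<otimes>\<^bsub>G\<^esub> y"

definition commutator_set :: "('a, 'b) monoid_scheme \<Rightarrow> 'a \<Rightarrow> ('a \<times> 'a) set" where
  "commutator_set G c = {(x, y). x \<in> carrier G \<and> y \<in> carrier G \<and> commutator G x y = c}"

definition k_large :: "('a, 'b) monoid_scheme \<Rightarrow> nat \<Rightarrow> 'a set \<Rightarrow> bool" where
  "k_large K k X \<longleftrightarrow> X \<subseteq> carrier K \<and>
     (\<forall>a. (\<forall>i<k. a i \<in> carrier K) \<longrightarrow> (\<Inter>i<k. a i <#\<^bsub>K\<^esub> X) \<noteq> {})"

definition left_invariant_prob :: "('a, 'b) monoid_scheme \<Rightarrow> 'a set set \<Rightarrow> ('a set \<Rightarrow> real) \<Rightarrow> bool" where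
  "left_invariant_prob K M \<mu> \<longleftrightarrow>
     algebra (carrier K) M \<and>
     (\<forall>Y\<in>M. 0 \<le> \<mu> Y) \<and>
     (\<forall>Y\<in>M. \<forall>Z\<in>M. Y \<inter> Z = {} \<longrightarrow> \<mu> (Y \<union> Z) = \<mu> Y + \<mu> Z) \<and>
     \<mu> (carrier K) = 1 \<and>
     (\<forall>g\<in>carrier K. \<forall>Y\<in>M. g <#\<^bsub>K\<^esub> Y \<in> M \<and> \<mu> (g <#\<^bsub>K\<^esub> Y) = \<mu> Y)"

definition inner_measure :: "'a set set \<Rightarrow> ('a set \<Rightarrow> real) \<Rightarrow> 'a set \<Rightarrow> real" where
  "inner_measure M \<mu> X = Sup {\<mu> Y | Y. Y \<in> M \<and> Y \<subseteq> X}"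

end

theory Submission
  imports Defs
begin

lemma (in group) lcan:
  "x \<in> carrier G \<Longrightarrow> y \<in> carrier G \<Longrightarrow> z \<in> carrier G \<Longrightarrow>
   (x \<otimes> y = x \<otimes> z) = (y = z)"
  by (metis Units_eq Units_l_cancel)

lemma (in group) invcan:
  "x \<in> carrier G \<Longrightarrow> y \<in> carrier G \<Longrightarrow> x \<otimes> (inv x \<otimes> y) = y"
  "x \<in> carrier G \<Longrightarrow> y \<in> carrier G \<Longrightarrow> inv x \<otimes> (x \<otimes> y) = y"
  by (simp_all add: m_assoc[symmetric])

lemma (in group) commA:
  assumes x: "x \<in> carrier G" and y: "y \<in> carrier G" and h: "h \<in> carrier G"
    and e: "commutator G x (h \<otimes> y) = commutator G x y"
  shows "h \<otimes> x = x \<otimes> h"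
proof -
  have "inv x \<otimes> inv y \<otimes> (inv h \<otimes> x \<otimes> h) \<otimes> y = inv x \<otimes> inv y \<otimes> x \<otimes> y"
    using e x y h by (simp add: commutator_def inv_mult_group m_assoc)
  then have "inv x \<otimes> inv y \<otimes> (inv h \<otimes> x \<otimes> h) = inv x \<otimes> inv y \<otimes> x"
    using x y h by (simp add: right_cancel)
  then have "inv x \<otimes> inv y \<otimes> (inv h \<otimes> x \<otimes> h) = inv x \<otimes> inv y \<otimes> x"
    by simp
  then have 1: "inv h \<otimes> x \<otimes> h = x"
    using x y h by (simp add: m_assoc lcan)
  have "h \<otimes> (inv h \<otimes> x \<otimes> h) = x \<otimes> h" using x h by (simp add: m_assoc[symmetric])
  with 1 show ?thesis by simp
qed

lemma (in group) commB:
  assumes x: "x \<in> carrier G" and y: "y \<in> carrier G" and g: "g \<in> carrier G"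
    and e: "commutator G (g \<otimes> x) y = commutator G x y"
  shows "g \<otimes> y = y \<otimes> g"
proof -
  have "inv x \<otimes> (inv g \<otimes> inv y \<otimes> g) \<otimes> x \<otimes> y = inv x \<otimes> inv y \<otimes> x \<otimes> y"
    using e x y g by (simp add: commutator_def inv_mult_group m_assoc)
  then have "inv x \<otimes> (inv g \<otimes> inv y \<otimes> g) = inv x \<otimes> inv y"
    using x y g by (simp add: right_cancel)
  then have 1: "inv g \<otimes> inv y \<otimes> g = inv y"
    using x y g by (simp add: lcan)
  have "y \<otimes> (g \<otimes> (inv g \<otimes> inv y \<otimes> g)) \<otimes> y = g \<otimes> y" using y g by (simp add: m_assoc[symmetric])
  moreover have "y \<otimes> (g \<otimes> inv y) \<otimes> y = y \<otimes> g" using y g by (simp add: m_assoc)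
  ultimately show ?thesis using 1 by simp
qed

lemma (in group) commC:
  assumes x: "x \<in> carrier G" and y: "y \<in> carrier G" and g: "g \<in> carrier G" and h: "h \<in> carrier G"
    and xh: "h \<otimes> x = x \<otimes> h" and yg: "g \<otimes> y = y \<otimes> g"
    and e: "commutator G (g \<otimes> x) (h \<otimes> y) = commutator G x y"
  shows "g \<otimes> h = h \<otimes> g"
proof -
  have "g \<otimes> x \<otimes> (h \<otimes> y) = g \<otimes> h \<otimes> x \<otimes> y" using x y g h xh by (simp add: m_assoc)
  then have "inv x \<otimes> (inv g \<otimes> inv y \<otimes> inv h \<otimes> g \<otimes> h) \<otimes> x \<otimes> y = inv x \<otimes> inv y \<otimes> x \<otimes> y"
    using e x y g h unfolding commutator_def by (simp add: inv_mult_group m_assoc)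
  then have "inv x \<otimes> (inv g \<otimes> inv y \<otimes> inv h \<otimes> g \<otimes> h) = inv x \<otimes> inv y"
    using x y g h by (simp add: right_cancel)
  then have 1: "inv g \<otimes> inv y \<otimes> inv h \<otimes> g \<otimes> h = inv y"
    using x y g h by (simp add: lcan m_assoc)
  have "inv g \<otimes> inv y = inv y \<otimes> inv g" using yg g y
    by (metis inv_mult_group)
  with 1 have "inv y \<otimes> (inv g \<otimes> inv h \<otimes> g \<otimes> h) = inv y \<otimes> \<one>" using y g h by (simp add: m_assoc)
  then have 2: "inv g \<otimes> inv h \<otimes> g \<otimes> h = \<one>" using y g h by (simp add: lcan)
  have "h \<otimes> g \<otimes> (inv g \<otimes> inv h \<otimes> g \<otimes> h) = g \<otimes> h" using g h by (simp add: m_assoc invcan)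
  with 2 show ?thesis using g h by simp
qed

lemma coset_mem:
  fixes G :: "('a, 'b) monoid_scheme" (structure)
  assumes G: "group G" and a1: "a1 \<in> carrier G" and a2: "a2 \<in> carrier G"
    and z: "z \<in> (a1, a2) <#\<^bsub>G \<times>\<times> G\<^esub> commutator_set G c"
  shows "fst z \<in> carrier G \<and> snd z \<in> carrier G \<and>
    commutator G (inv\<^bsub>G\<^esub> a1 \<otimes>\<^bsub>G\<^esub> fst z) (inv\<^bsub>G\<^esub> a2 \<otimes>\<^bsub>G\<^esub> snd z) = c"
proof -
  interpret group G by fact
  from z obtain u v where uv: "u \<in> carrier G" "v \<in> carrier G" "commutator G u v = c"
    and zz: "z = (a1 \<otimes> u, a2 \<otimes> v)"
    unfolding l_coset_def commutator_set_def by auto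
  show ?thesis using uv zz a1 a2 by (simp add: invcan)
qed

lemma part1:
  fixes G :: "('a, 'b) monoid_scheme" (structure)
  assumes G: "group G" and L: "k_large (G \<times>\<times> G) 4 (commutator_set G c)"
  shows "comm_group G \<and> c = \<one>\<^bsub>G\<^esub>"
proof -
  interpret group G by fact
  have key: "\<exists>p q. p \<in> carrier G \<and> q \<in> carrier G \<and> commutator G p q = c \<and>
     (g \<otimes> h = h \<otimes> g)" if g: "g \<in> carrier G" and h: "h \<in> carrier G" for g h
  proof -
    define a :: "nat \<Rightarrow> 'a \<times> 'a" where "a = (\<lambda>i. if i = 0 then (\<one>, \<one>) else if i = 1 then (\<one>, inv h)
       else if i = 2 then (inv g, \<one>) else (inv g, inv h))"
    have "\<forall>i<4. a i \<in> carrier (G \<times>\<times> G)" using g h by (simp add: a_def)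
    with L obtain z where z: "\<And>i. i < 4 \<Longrightarrow> z \<in> a i <#\<^bsub>G \<times>\<times> G\<^esub> commutator_set G c"
      unfolding k_large_def by blast
    obtain p q where zpq: "z = (p, q)" by (cases z)
    have z0: "z \<in> (\<one>, \<one>) <#\<^bsub>G \<times>\<times> G\<^esub> commutator_set G c" using z[of 0] by (simp add: a_def)
    have z1: "z \<in> (\<one>, inv h) <#\<^bsub>G \<times>\<times> G\<^esub> commutator_set G c" using z[of 1] by (simp add: a_def)
    have z2: "z \<in> (inv g, \<one>) <#\<^bsub>G \<times>\<times> G\<^esub> commutator_set G c" using z[of 2] by (simp add: a_def)
    have z3: "z \<in> (inv g, inv h) <#\<^bsub>G \<times>\<times> G\<^esub> commutator_set G c" using z[of 3] by (simp add: a_def)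
    note c0 = coset_mem[OF G one_closed one_closed z0, unfolded zpq fst_conv snd_conv]
    note c1 = coset_mem[OF G one_closed inv_closed[OF h] z1, unfolded zpq fst_conv snd_conv]
    note c2 = coset_mem[OF G inv_closed[OF g] one_closed z2, unfolded zpq fst_conv snd_conv]
    note c3 = coset_mem[OF G inv_closed[OF g] inv_closed[OF h] z3, unfolded zpq fst_conv snd_conv]
    have p: "p \<in> carrier G" and q: "q \<in> carrier G" using c0 by blast+
    have e0: "commutator G p q = c" using c0 p q by (simp only: inv_one l_one)
    have e1: "commutator G p (h \<otimes> q) = commutator G p q" using c1 p q h e0 by (simp only: inv_one l_one inv_inv)
    have e2: "commutator G (g \<otimes> p) q = commutator G p q" using c2 p q g e0 by (simp only: inv_one l_one inv_inv)
    have e3: "commutator G (g \<otimes> p) (h \<otimes> q) = commutator G p q" using c3 p q g h e0 by (simp only: inv_inv)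
    have xh: "h \<otimes> p = p \<otimes> h" by (rule commA[OF p q h e1])
    have yg: "g \<otimes> q = q \<otimes> g" by (rule commB[OF p q g e2])
    have "g \<otimes> h = h \<otimes> g" by (rule commC[OF p q g h xh yg e3])
    then show ?thesis using p q e0 by blast
  qed
  have cg: "comm_group G"
    by (rule group_comm_groupI) (use key in blast)
  then interpret comm_group G .
  obtain p q where "p \<in> carrier G" "q \<in> carrier G" "commutator G p q = c"
    using key[OF one_closed one_closed] by blast
  then have "c = \<one>" unfolding commutator_def
    by (simp add: m_comm[of "inv p" "inv q"] m_assoc invcan)
  with cg show ?thesis by simp
qed

lemma lcos_mono: "Y \<subseteq> X \<Longrightarrow> a <#\<^bsub>K\<^esub> Y \<subseteq> a <#\<^bsub>K\<^esub> X"
  unfolding l_coset_def by blast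

lemma part2:
  fixes G :: "('a, 'b) monoid_scheme"
  assumes G: "group G" and P: "left_invariant_prob (G \<times>\<times> G) M \<mu>"
    and Y: "Y \<in> M" "Y \<subseteq> commutator_set G c" and big: "\<mu> Y > 3/4"
  shows "k_large (G \<times>\<times> G) 4 (commutator_set G c)"
proof -
  let ?K = "carrier (G \<times>\<times> G)"
  have alg: "algebra ?K M" and nn: "\<And>Y. Y \<in> M \<Longrightarrow> 0 \<le> \<mu> Y"
    and add: "\<And>Y Z. Y \<in> M \<Longrightarrow> Z \<in> M \<Longrightarrow> Y \<inter> Z = {} \<Longrightarrow> \<mu> (Y \<union> Z) = \<mu> Y + \<mu> Z"
    and one: "\<mu> ?K = 1"
    and inv: "\<And>g Y. g \<in> ?K \<Longrightarrow> Y \<in> M \<Longrightarrow> g <#\<^bsub>G \<times>\<times> G\<^esub> Y \<in> M \<and> \<mu> (g <#\<^bsub>G \<times>\<times> G\<^esub> Y) = \<mu> Y"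
    using P unfolding left_invariant_prob_def by blast+
  interpret algebra ?K M by (rule alg)
  have sub: "\<mu> (A \<union> B) \<le> \<mu> A + \<mu> B" if A: "A \<in> M" and B: "B \<in> M" for A B
  proof -
    have d: "B - A \<in> M" "B \<inter> A \<in> M" using A B by auto
    have e1: "\<mu> (A \<union> (B - A)) = \<mu> A + \<mu> (B - A)" by (rule add) (use A d in auto)
    have e2: "A \<union> (B - A) = A \<union> B" by blast
    have e3: "\<mu> ((B - A) \<union> (B \<inter> A)) = \<mu> (B - A) + \<mu> (B \<inter> A)" by (rule add) (use d in auto)
    have e4: "(B - A) \<union> (B \<inter> A) = B" by blast
    have "\<mu> (A \<union> B) = \<mu> A + \<mu> (B - A)" using e1 unfolding e2 .
    moreover have "\<mu> B = \<mu> (B - A) + \<mu> (B \<inter> A)" using e3 unfolding e4 .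
    moreover have "0 \<le> \<mu> (B \<inter> A)" using d nn by auto
    ultimately show ?thesis by linarith
  qed
  have compl: "\<mu> (?K - A) = 1 - \<mu> A" if A: "A \<in> M" for A
  proof -
    have "(?K - A) \<union> A = ?K" using sets_into_space A by blast
    moreover have "\<mu> ((?K - A) \<union> A) = \<mu> (?K - A) + \<mu> A" by (rule add) (use A compl_sets[OF A] in auto)
    ultimately show ?thesis using one by simp
  qed
  have Xsub: "commutator_set G c \<subseteq> ?K" unfolding commutator_set_def by auto
  show ?thesis unfolding k_large_def
  proof (intro conjI allI impI Xsub)
    fix a :: "nat \<Rightarrow> 'a \<times> 'a"
    assume a: "\<forall>i<4. a i \<in> ?K"
    define T where "T i = a i <#\<^bsub>G \<times>\<times> G\<^esub> Y" for i
    have TM: "T i \<in> M" "\<mu> (T i) = \<mu> Y" if "i < 4" for i using inv[of "a i" Y] a that Y unfolding T_def by auto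
    have TK: "T i \<subseteq> ?K" if "i < 4" for i by (rule sets_into_space[OF TM(1)[OF that]])
    have CM: "?K - T i \<in> M" "\<mu> (?K - T i) = 1 - \<mu> Y" if "i < 4" for i using TM[OF that] compl[OF TM(1)[OF that]] compl_sets[OF TM(1)[OF that]] by auto
    define C where "C i = ?K - T i" for i
    have C: "C i \<in> M" "\<mu> (C i) = 1 - \<mu> Y" if "i < 4" for i using CM[OF that] unfolding C_def by auto
    have C0: "C 0 \<in> M" "\<mu> (C 0) = 1 - \<mu> Y" using C[of 0] by simp_all
    have C1: "C 1 \<in> M" "\<mu> (C 1) = 1 - \<mu> Y" using C[of 1] by simp_all
    have C2: "C 2 \<in> M" "\<mu> (C 2) = 1 - \<mu> Y" using C[of 2] by simp_all
    have C3: "C 3 \<in> M" "\<mu> (C 3) = 1 - \<mu> Y" using C[of 3] by simp_all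
    have U01: "C 0 \<union> C 1 \<in> M" by (rule Un[OF C0(1) C1(1)])
    have U012: "C 0 \<union> C 1 \<union> C 2 \<in> M" by (rule Un[OF U01 C2(1)])
    have "\<mu> (C 0 \<union> C 1 \<union> C 2 \<union> C 3) \<le> \<mu> (C 0 \<union> C 1 \<union> C 2) + \<mu> (C 3)"
      by (rule sub[OF U012 C3(1)])
    also have "\<dots> \<le> \<mu> (C 0 \<union> C 1) + \<mu> (C 2) + \<mu> (C 3)"
      using sub[OF U01 C2(1)] by linarith
    also have "\<dots> \<le> \<mu> (C 0) + \<mu> (C 1) + \<mu> (C 2) + \<mu> (C 3)"
      using sub[OF C0(1) C1(1)] by linarith
    also have "\<dots> < 1" using C0 C1 C2 C3 big by linarith
    finally have lt: "\<mu> (C 0 \<union> C 1 \<union> C 2 \<union> C 3) < 1" .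
    have "(\<Inter>i<4. T i) \<noteq> {}"
    proof
      assume e: "(\<Inter>i<4. T i) = {}"
      have l4: "{..<4::nat} = {0,1,2,3}" by auto
      have "(\<Inter>i<4. T i) = T 0 \<inter> T 1 \<inter> T 2 \<inter> T 3" unfolding l4 by (simp add: Int_assoc)
      with e have e': "T 0 \<inter> T 1 \<inter> T 2 \<inter> T 3 = {}" by simp
      have "C 0 \<union> C 1 \<union> C 2 \<union> C 3 = ?K - (T 0 \<inter> T 1 \<inter> T 2 \<inter> T 3)"
        unfolding C_def by blast
      with e' have "C 0 \<union> C 1 \<union> C 2 \<union> C 3 = ?K" by simp
      with lt one show False by simp
    qed
    moreover have "(\<Inter>i<4. T i) \<subseteq> (\<Inter>i<4. a i <#\<^bsub>G \<times>\<times> G\<^esub> commutator_set G c)"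
      unfolding T_def using lcos_mono[OF Y(2)] by blast
    ultimately show "(\<Inter>i<4. a i <#\<^bsub>G \<times>\<times> G\<^esub> commutator_set G c) \<noteq> {}" by blast
  qed
qed

theorem corollary5p7:
  fixes G :: "('a, 'b) monoid_scheme" and c :: 'a
  assumes "group G" and "c \<in> carrier G"
  shows "(k_large (G \<times>\<times> G) 4 (commutator_set G c) \<longrightarrow> comm_group G \<and> c = \<one>\<^bsub>G\<^esub>)
    \<and> (\<forall>M \<mu>. left_invariant_prob (G \<times>\<times> G) M \<mu> \<longrightarrow> (\<not> comm_group G \<or> c \<noteq> \<one>\<^bsub>G\<^esub>) \<longrightarrow>
          inner_measure M \<mu> (commutator_set G c) \<le> 3 / 4)"
proof (rule conjI)
  show "k_large (G \<times>\<times> G) 4 (commutator_set G c) \<longrightarrow> comm_group G \<and> c = \<one>\<^bsub>G\<^esub>"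
    by (rule impI) (rule part1[OF assms(1)])
next
  show "\<forall>M \<mu>. left_invariant_prob (G \<times>\<times> G) M \<mu> \<longrightarrow> (\<not> comm_group G \<or> c \<noteq> \<one>\<^bsub>G\<^esub>) \<longrightarrow>
          inner_measure M \<mu> (commutator_set G c) \<le> 3 / 4"
  proof (intro allI impI)
  fix M \<mu>
  assume P: "left_invariant_prob (G \<times>\<times> G) M \<mu>" and N: "\<not> comm_group G \<or> c \<noteq> \<one>\<^bsub>G\<^esub>"
  have "algebra (carrier (G \<times>\<times> G)) M" using P unfolding left_invariant_prob_def by blast
  then interpret algebra "carrier (G \<times>\<times> G)" M .
  have "{} \<in> M" by simp
  then have "\<mu> {} \<in> {\<mu> Y |Y. Y \<in> M \<and> Y \<subseteq> commutator_set G c}" by auto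
  then have ne: "{\<mu> Y |Y. Y \<in> M \<and> Y \<subseteq> commutator_set G c} \<noteq> {}" by auto
  show "inner_measure M \<mu> (commutator_set G c) \<le> 3 / 4"
    unfolding inner_measure_def
  proof (rule cSup_least[OF ne])
    fix r assume "r \<in> {\<mu> Y |Y. Y \<in> M \<and> Y \<subseteq> commutator_set G c}"
    then obtain Y where Y: "Y \<in> M" "Y \<subseteq> commutator_set G c" "r = \<mu> Y" by blast
    show "r \<le> 3/4"
    proof (rule ccontr)
      assume "\<not> r \<le> 3/4"
      then have "k_large (G \<times>\<times> G) 4 (commutator_set G c)"
        using part2[OF assms(1) P Y(1,2)] Y(3) by simp
      then have "comm_group G \<and> c = \<one>\<^bsub>G\<^esub>" by (rule part1[OF assms(1)])
      then show False using N by simp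
    qed
  qed
qed

qed

end
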